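(* Let $G_1,\dots,G_k$ be connected graphs, each with at least $2$ vertices. Then $$\gamma(G_1\times G_2\times\cdots\times G_k)=\frac{1}{\sum_{i=1}^k \frac{1}{\gamma(G_i)}}.$$
   Context: For a finite simple undirected graph $G$ with $n$ vertices, let $\mathcal{F}=\{x\in\mathbb{R}^{V(G)} : \sum_{v} x_v = 0,\ \|x\|_\infty = 1\}$, for $x\in\mathcal{F}$ let $\gamma_x(G)=\max_{uv\in E(G)}|x_u-x_v|$, and $\gamma(G)=\min_{x\in\mathcal{F}}\gamma_x(G)$. The Cartesian product $G_1\times\cdots\times G_k$ has vertex set $V(G_1)\times\cdots\times V(G_k)$, with $(u_1,\dots,u_k)\sim(v_1,\dots,v_k)$ iff there is exactly one index $i$ with $u_i\sim v_i$ in $G_i$ and $u_j=v_j$ for all $j\ne i$. *)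

theory Defs
  imports "HOL-Library.FuncSet" Complex_Main
begin

definition simple_graph :: "'a set \<Rightarrow> ('a \<Rightarrow> 'a \<Rightarrow> bool) \<Rightarrow> bool" where
  "simple_graph V E \<longleftrightarrow> finite V \<and> (\<forall>u v. E u v \<longrightarrow> u \<in> V \<and> v \<in> V)
     \<and> (\<forall>u v. E u v \<longrightarrow> E v u) \<and> (\<forall>v. \<not> E v v)"

definition connected_graph :: "'a set \<Rightarrow> ('a \<Rightarrow> 'a \<Rightarrow> bool) \<Rightarrow> bool" where
  "connected_graph V E \<longleftrightarrow> (\<forall>u\<in>V. \<forall>v\<in>V. E\<^sup>*\<^sup>* u v)"

definition sup_norm :: "'a set \<Rightarrow> ('a \<Rightarrow> real) \<Rightarrow> real" where
  "sup_norm V x = Max ((\<lambda>v. \<bar>x v\<bar>) ` V)"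

definition feasible :: "'a set \<Rightarrow> ('a \<Rightarrow> real) set" where
  "feasible V = {x. (\<Sum>v\<in>V. x v) = 0 \<and> sup_norm V x = 1}"

definition gamma_x :: "'a set \<Rightarrow> ('a \<Rightarrow> 'a \<Rightarrow> bool) \<Rightarrow> ('a \<Rightarrow> real) \<Rightarrow> real" where
  "gamma_x V E x = Max ({0} \<union> {\<bar>x u - x v\<bar> | u v. u \<in> V \<and> v \<in> V \<and> E u v})"

text \<open>gamma(G) = min over feasible x (the minimum is attained; we write it as Inf).\<close>
definition gamma :: "'a set \<Rightarrow> ('a \<Rightarrow> 'a \<Rightarrow> bool) \<Rightarrow> real" where
  "gamma V E = Inf (gamma_x V E ` feasible V)"

text \<open>Cartesian product of graphs (V i, E i), i < k. Vertices are k-tuples, i.e.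
  extensional functions on {..<k}.\<close>
definition prod_vertices :: "nat \<Rightarrow> (nat \<Rightarrow> 'a set) \<Rightarrow> (nat \<Rightarrow> 'a) set" where
  "prod_vertices k V = PiE {..<k} V"

definition prod_edges :: "nat \<Rightarrow> (nat \<Rightarrow> 'a set) \<Rightarrow> (nat \<Rightarrow> 'a \<Rightarrow> 'a \<Rightarrow> bool)
    \<Rightarrow> (nat \<Rightarrow> 'a) \<Rightarrow> (nat \<Rightarrow> 'a) \<Rightarrow> bool" where
  "prod_edges k V E x y \<longleftrightarrow> x \<in> prod_vertices k V \<and> y \<in> prod_vertices k V \<and>
     (\<exists>i<k. E i (x i) (y i) \<and> (\<forall>j<k. j \<noteq> i \<longrightarrow> x j = y j))"

end

theory Submission
  imports Defs
begin


lemma gx_set_finite: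
  assumes "finite V"
  shows "finite ({0} \<union> {\<bar>x u - x v\<bar> | u v. u\<in>V \<and> v\<in>V \<and> E u v})"
proof -
  have "{\<bar>x u - x v\<bar> | u v. u\<in>V \<and> v\<in>V \<and> E u v} \<subseteq> (\<lambda>(u,v). \<bar>x u - x v\<bar>) ` (V\<times>V)" by auto
  moreover have "finite ((\<lambda>(u,v). \<bar>x u - x v\<bar>) ` (V\<times>V))" using assms by simp
  ultimately have "finite {\<bar>x u - x v\<bar> | u v. u\<in>V \<and> v\<in>V \<and> E u v}" by (rule finite_subset)
  thus ?thesis by simp
qed

lemma gx_ge: "finite V \<Longrightarrow> u\<in>V \<Longrightarrow> v\<in>V \<Longrightarrow> E u v \<Longrightarrow> \<bar>x u - x v\<bar> \<le> gamma_x V E x"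
  unfolding gamma_x_def by (rule Max_ge[OF gx_set_finite]) auto

lemma gx_nonneg: "finite V \<Longrightarrow> 0 \<le> gamma_x V E x"
  unfolding gamma_x_def by (rule Max_ge[OF gx_set_finite]) auto

lemma gx_le: "finite V \<Longrightarrow> 0 \<le> t \<Longrightarrow> (\<And>u v. u\<in>V \<Longrightarrow> v\<in>V \<Longrightarrow> E u v \<Longrightarrow> \<bar>x u - x v\<bar> \<le> t) \<Longrightarrow> gamma_x V E x \<le> t"
  unfolding gamma_x_def by (subst Max_le_iff[OF gx_set_finite]) auto

lemma gx_neg: "gamma_x V E (\<lambda>v. - y v) = gamma_x V E y"
proof -
  have eq: "\<And>u v. \<bar>- y u - - y v\<bar> = \<bar>y u - y v\<bar>" by linarith
  show ?thesis unfolding gamma_x_def eq ..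
qed

lemma sn_ge: "finite V \<Longrightarrow> v\<in>V \<Longrightarrow> \<bar>x v\<bar> \<le> sup_norm V x"
  unfolding sup_norm_def by auto

lemma sn_in: "finite V \<Longrightarrow> V \<noteq> {} \<Longrightarrow> \<exists>v\<in>V. \<bar>x v\<bar> = sup_norm V x"
proof -
  assume "finite V" "V \<noteq> {}"
  hence "Max ((\<lambda>v. \<bar>x v\<bar>) ` V) \<in> (\<lambda>v. \<bar>x v\<bar>) ` V" by (intro Max_in) auto
  thus ?thesis unfolding sup_norm_def by auto
qed

lemma sn_le: "finite V \<Longrightarrow> V\<noteq>{} \<Longrightarrow> (\<And>v. v\<in>V \<Longrightarrow> \<bar>x v\<bar> \<le> t) \<Longrightarrow> sup_norm V x \<le> t"
  unfolding sup_norm_def by (subst Max_le_iff) auto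

lemma sn_neg: "sup_norm V (\<lambda>v. - y v) = sup_norm V y"
  unfolding sup_norm_def by simp

lemma gamma_lower: "finite V \<Longrightarrow> x \<in> feasible V \<Longrightarrow> gamma V E \<le> gamma_x V E x"
  unfolding gamma_def by (rule cInf_lower) (auto intro!: bdd_belowI2[where m=0] gx_nonneg)

lemma gamma_greatest: "feasible V \<noteq> {} \<Longrightarrow> (\<And>x. x\<in>feasible V \<Longrightarrow> c \<le> gamma_x V E x) \<Longrightarrow> c \<le> gamma V E"
  unfolding gamma_def by (rule cInf_greatest) auto

lemma gamma_approx: "feasible V \<noteq> {} \<Longrightarrow> gamma V E < z \<Longrightarrow> \<exists>x\<in>feasible V. gamma_x V E x < z"
  unfolding gamma_def using cInf_lessD[of "gamma_x V E ` feasible V" z] by auto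

lemma feasible_ne:
  assumes "2 \<le> card V" shows "feasible V \<noteq> {}"
proof -
  have fin: "finite V" using assms by (metis card.infinite not_numeral_le_zero)
  have "\<not> card V \<le> Suc 0" using assms by simp
  then obtain a b where ab: "a\<in>V" "b\<in>V" "a \<noteq> b"
    using card_le_Suc0_iff_eq[OF fin] by blast
  define x where "x = (\<lambda>v. if v = a then 1 else if v = b then -1 else (0::real))"
  have "(\<Sum>v\<in>V. x v) = (\<Sum>v\<in>{a,b}. x v)"
    by (rule sum.mono_neutral_right) (use fin ab in \<open>auto simp: x_def\<close>)
  also have "\<dots> = 0" using ab by (simp add: x_def)
  finally have s: "(\<Sum>v\<in>V. x v) = 0" .
  have "sup_norm V x \<le> 1" by (rule sn_le) (use fin ab in \<open>auto simp: x_def\<close>)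
  moreover have "1 \<le> sup_norm V x" using sn_ge[OF fin ab(1), of x] by (simp add: x_def)
  ultimately have "sup_norm V x = 1" by simp
  with s have "x \<in> feasible V" by (simp add: feasible_def)
  thus ?thesis by auto
qed

lemma path_bound:
  assumes "simple_graph V E" "(E ^^ n) v w"
    and lip: "\<And>a b. a\<in>V \<Longrightarrow> b\<in>V \<Longrightarrow> E a b \<Longrightarrow> \<bar>x a - x b\<bar> \<le> g"
  shows "\<bar>x v - x w\<bar> \<le> real n * g"
  using assms(2)
proof (induction n arbitrary: w)
  case 0 then show ?case by simp
next
  case (Suc n)
  from Suc.prems obtain y where y: "(E ^^ n) v y" "E y w" by (rule relpowp_Suc_E)
  have "y \<in> V" "w \<in> V" using y(2) assms(1) unfolding simple_graph_def by auto
  have "\<bar>x v - x w\<bar> \<le> \<bar>x v - x y\<bar> + \<bar>x y - x w\<bar>" by simp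
  also have "\<dots> \<le> real n * g + g" using Suc.IH[OF y(1)] lip[OF \<open>y\<in>V\<close> \<open>w\<in>V\<close> y(2)] by simp
  finally show ?case by (simp add: algebra_simps)
qed

lemma gamma_pos:
  assumes sg: "simple_graph V E" and cg: "connected_graph V E" and c2: "2 \<le> card V"
  shows "0 < gamma V E"
proof -
  have fin: "finite V" using sg by (simp add: simple_graph_def)
  have ne: "V \<noteq> {}" using c2 by auto
  define N where "N = Max ((\<lambda>(v,w). LEAST n. (E ^^ n) v w) ` (V\<times>V)) + 1"
  have N: "\<exists>n\<le>N. (E ^^ n) v w" if "v\<in>V" "w\<in>V" for v w
  proof -
    have "E\<^sup>*\<^sup>* v w" using cg that by (simp add: connected_graph_def)
    then obtain n where "(E ^^ n) v w" using rtranclp_imp_relpowp by metis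
    hence "(E ^^ (LEAST n. (E ^^ n) v w)) v w" by (rule LeastI)
    moreover have "(LEAST n. (E ^^ n) v w) \<le> Max ((\<lambda>(v,w). LEAST n. (E ^^ n) v w) ` (V\<times>V))"
      by (rule Max_ge) (use fin that in \<open>auto intro!: rev_image_eqI[where x="(v,w)"]\<close>)
    hence "(LEAST n. (E ^^ n) v w) \<le> N" unfolding N_def by simp
    ultimately show ?thesis by blast
  qed
  have Npos: "0 < real N" unfolding N_def by simp
  have "1 / real N \<le> gamma V E"
  proof (rule gamma_greatest[OF feasible_ne[OF c2]])
    fix x assume xf: "x \<in> feasible V"
    hence sx: "(\<Sum>v\<in>V. x v) = 0" and nx: "sup_norm V x = 1" by (auto simp: feasible_def)
    obtain v where v: "v\<in>V" "\<bar>x v\<bar> = 1" using sn_in[OF fin ne, of x] nx by auto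
    have "\<exists>w\<in>V. 1 \<le> \<bar>x v - x w\<bar>"
    proof (cases "x v = 1")
      case True
      have "\<exists>w\<in>V. x w \<le> 0"
      proof (rule ccontr)
        assume "\<not> ?thesis"
        hence "0 < (\<Sum>v\<in>V. x v)" using fin ne by (intro sum_pos) auto
        with sx show False by simp
      qed
      then show ?thesis using True by force
    next
      case False
      hence xv: "x v = -1" using v by linarith
      have "\<exists>w\<in>V. 0 \<le> x w"
      proof (rule ccontr)
        assume "\<not> ?thesis"
        hence "0 < (\<Sum>v\<in>V. - x v)" using fin ne by (intro sum_pos) auto
        with sx show False by (simp add: sum_negf)
      qed
      then show ?thesis using xv by force
    qed
    then obtain w where w: "w\<in>V" "1 \<le> \<bar>x v - x w\<bar>" by blast
    obtain n where n: "n \<le> N" "(E ^^ n) v w" using N[OF v(1) w(1)] by blast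
    have g0: "0 \<le> gamma_x V E x" by (rule gx_nonneg[OF fin])
    have "\<bar>x v - x w\<bar> \<le> real n * gamma_x V E x"
      by (rule path_bound[OF sg n(2)]) (rule gx_ge[OF fin])
    hence "1 \<le> real n * gamma_x V E x" using w(2) by linarith
    also have "\<dots> \<le> real N * gamma_x V E x" using n(1) g0 by (simp add: mult_right_mono)
    finally show "1 / real N \<le> gamma_x V E x" using Npos by (simp add: divide_le_eq mult.commute)
  qed
  moreover have "0 < 1 / real N" using Npos by simp
  ultimately show ?thesis by linarith
qed

lemma factor_bound:
  assumes fin: "finite V" and ne: "V \<noteq> {}" and gp: "0 < gamma V E" and a: "a \<in> V"
  shows "\<bar>y a - (\<Sum>v\<in>V. y v) / card V\<bar> \<le> gamma_x V E y / gamma V E"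
proof -
  define m where "m = (\<Sum>v\<in>V. y v) / card V"
  define M where "M = sup_norm V (\<lambda>v. y v - m)"
  have aM: "\<bar>y a - m\<bar> \<le> M" unfolding M_def using sn_ge[OF fin a, of "\<lambda>v. y v - m"] by simp
  have L0: "0 \<le> gamma_x V E y" by (rule gx_nonneg[OF fin])
  show ?thesis
  proof (cases "M = 0")
    case True
    have "0 \<le> gamma_x V E y / gamma V E" using L0 gp by simp
    then show ?thesis using aM True unfolding m_def by linarith
  next
    case False
    hence Mp: "0 < M" using aM by linarith
    define z where "z = (\<lambda>v. (y v - m) / M)"
    have cardp: "0 < real (card V)" using fin ne by (simp add: card_gt_0_iff)
    have "(\<Sum>v\<in>V. z v) = (\<Sum>v\<in>V. y v - m) / M"
      unfolding z_def by (rule sum_divide_distrib[symmetric])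
    also have "(\<Sum>v\<in>V. y v - m) = (\<Sum>v\<in>V. y v) - real (card V) * m"
      by (simp add: sum_subtractf)
    also have "\<dots> = 0" using cardp unfolding m_def by simp
    finally have sz: "(\<Sum>v\<in>V. z v) = 0" by simp
    have zabs: "\<bar>z v\<bar> = \<bar>y v - m\<bar> / M" for v
      unfolding z_def using Mp by (simp add: abs_divide)
    obtain v0 where v0: "v0\<in>V" "\<bar>y v0 - m\<bar> = M" using sn_in[OF fin ne, of "\<lambda>v. y v - m"] M_def by auto
    have "sup_norm V z \<le> 1"
    proof (rule sn_le[OF fin ne])
      fix v assume "v\<in>V"
      hence "\<bar>y v - m\<bar> \<le> M" unfolding M_def using sn_ge[OF fin, of v "\<lambda>v. y v - m"] by simp
      thus "\<bar>z v\<bar> \<le> 1" unfolding zabs using Mp by simp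
    qed
    moreover have "1 \<le> sup_norm V z"
      using sn_ge[OF fin v0(1), of z] unfolding zabs v0(2) using Mp by simp
    ultimately have "sup_norm V z = 1" by simp
    with sz have zf: "z \<in> feasible V" by (simp add: feasible_def)
    have "gamma_x V E z \<le> gamma_x V E y / M"
    proof (rule gx_le[OF fin])
      show "0 \<le> gamma_x V E y / M" using L0 Mp by simp
      fix u v assume "u\<in>V" "v\<in>V" "E u v"
      hence h: "\<bar>y u - y v\<bar> \<le> gamma_x V E y" by (rule gx_ge[OF fin])
      have "z u - z v = (y u - y v) / M" unfolding z_def by (simp add: diff_divide_distrib)
      hence "\<bar>z u - z v\<bar> = \<bar>y u - y v\<bar> / M" using Mp by (simp add: abs_divide)
      also have "\<dots> \<le> gamma_x V E y / M" using h Mp by (rule divide_right_mono[OF _ less_imp_le])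
      finally show "\<bar>z u - z v\<bar> \<le> gamma_x V E y / M" .
    qed
    hence g: "gamma V E \<le> gamma_x V E y / M" using gamma_lower[OF fin zf, of E] by simp
    have "M \<le> gamma_x V E y / gamma V E"
    proof -
      have "gamma V E * M \<le> gamma_x V E y" using g Mp by (simp add: le_divide_eq)
      thus ?thesis using gp by (simp add: le_divide_eq mult.commute)
    qed
    then show ?thesis using aM unfolding m_def by simp
  qed
qed



definition avg :: "(nat \<Rightarrow> 'a set) \<Rightarrow> nat \<Rightarrow> ((nat \<Rightarrow> 'a) \<Rightarrow> real) \<Rightarrow> (nat \<Rightarrow> 'a) \<Rightarrow> real" where
  "avg V j y u = (\<Sum>a\<in>V j. y (u(j:=a))) / card (V j)"

primrec Mx :: "(nat \<Rightarrow> 'a set) \<Rightarrow> ((nat \<Rightarrow> 'a) \<Rightarrow> real) \<Rightarrow> nat \<Rightarrow> (nat \<Rightarrow> 'a) \<Rightarrow> real" where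
  "Mx V x 0 = x"
| "Mx V x (Suc i) = avg V i (Mx V x i)"

definition lipp :: "nat \<Rightarrow> (nat \<Rightarrow> 'a set) \<Rightarrow> (nat \<Rightarrow> 'a \<Rightarrow> 'a \<Rightarrow> bool) \<Rightarrow> real \<Rightarrow> ((nat \<Rightarrow> 'a) \<Rightarrow> real) \<Rightarrow> bool" where
  "lipp k V E t y \<longleftrightarrow> 0 \<le> t \<and> (\<forall>u w. prod_edges k V E u w \<longrightarrow> \<bar>y u - y w\<bar> \<le> t)"

lemma upd_in: "u \<in> PiE {..<k} V \<Longrightarrow> j < k \<Longrightarrow> a \<in> V j \<Longrightarrow> u(j:=a) \<in> PiE {..<k} V"
  by (auto simp: PiE_def extensional_def Pi_def)

lemma PiE_out: "u \<in> PiE {..<k} V \<Longrightarrow> \<not> l < k \<Longrightarrow> u l = undefined"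
  by (auto simp: PiE_def extensional_def)

lemma sum_upd:
  fixes y :: "(nat \<Rightarrow> 'a) \<Rightarrow> real" and V :: "nat \<Rightarrow> 'a set"
  assumes "j < k" "finite (V j)" "\<forall>i<k. finite (V i)"
  shows "(\<Sum>u\<in>PiE {..<k} V. \<Sum>a\<in>V j. y (u(j:=a))) = real (card (V j)) * (\<Sum>u\<in>PiE {..<k} V. y u)"
proof -
  let ?P = "PiE {..<k} V"
  define h :: "(nat \<Rightarrow> 'a) \<times> 'a \<Rightarrow> (nat \<Rightarrow> 'a) \<times> 'a" where "h = (\<lambda>p. ((fst p)(j := snd p), fst p j))"
  have bij: "bij_betw h (?P \<times> V j) (?P \<times> V j)"
  proof (rule bij_betw_byWitness[where f'=h])
    show "\<forall>a\<in>?P \<times> V j. h (h a) = a" by (auto simp: h_def)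
    show "\<forall>a\<in>?P \<times> V j. h (h a) = a" by (auto simp: h_def)
    show "h ` (?P \<times> V j) \<subseteq> ?P \<times> V j"
    proof
      fix p assume "p \<in> h ` (?P \<times> V j)"
      then obtain u a where ua: "u \<in> ?P" "a \<in> V j" "p = h (u, a)" by auto
      have "u(j:=a) \<in> ?P" by (rule upd_in[OF ua(1) assms(1) ua(2)])
      moreover have "u j \<in> V j" using ua(1) assms(1) by (simp add: PiE_mem)
      ultimately show "p \<in> ?P \<times> V j" using ua(3) by (simp add: h_def)
    qed
    thus "h ` (?P \<times> V j) \<subseteq> ?P \<times> V j" .
  qed
  have "(\<Sum>u\<in>?P. \<Sum>a\<in>V j. y (u(j:=a))) = (\<Sum>p\<in>?P\<times>V j. y (fst (h p)))"
    by (simp add: sum.cartesian_product h_def case_prod_beta)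
  also have "\<dots> = (\<Sum>p\<in>?P\<times>V j. y (fst p))"
    by (rule sum.reindex_bij_betw[OF bij])
  also have "\<dots> = (\<Sum>u\<in>?P. \<Sum>a\<in>V j. y u)"
    by (simp add: sum.cartesian_product')
  also have "\<dots> = real (card (V j)) * (\<Sum>u\<in>?P. y u)"
    by (simp add: sum_distrib_left)
  finally show ?thesis .
qed

lemma sum_avg:
  assumes "j < k" "\<forall>i<k. finite (V i) \<and> V i \<noteq> {}"
  shows "(\<Sum>u\<in>PiE {..<k} V. avg V j y u) = (\<Sum>u\<in>PiE {..<k} V. y u)"
proof -
  have c: "0 < real (card (V j))" using assms by (simp add: card_gt_0_iff)
  have "(\<Sum>u\<in>PiE {..<k} V. avg V j y u) = (\<Sum>u\<in>PiE {..<k} V. \<Sum>a\<in>V j. y (u(j:=a))) / card (V j)"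
    unfolding avg_def by (simp add: sum_divide_distrib)
  also have "\<dots> = (\<Sum>u\<in>PiE {..<k} V. y u)"
    using sum_upd[of j k V y] assms c by simp
  finally show ?thesis .
qed

lemma avg_lip:
  assumes j: "j < k" and fv: "finite (V j)" "V j \<noteq> {}" and L: "lipp k V E t y"
  shows "lipp k V E t (avg V j y)"
  unfolding lipp_def
proof (intro conjI allI impI)
  show t0: "0 \<le> t" using L by (simp add: lipp_def)
  fix u w assume pe: "prod_edges k V E u w"
  then obtain i where i: "i < k" "E i (u i) (w i)" "\<forall>l<k. l \<noteq> i \<longrightarrow> u l = w l"
    and uP: "u \<in> PiE {..<k} V" and wP: "w \<in> PiE {..<k} V"
    by (auto simp: prod_edges_def prod_vertices_def)
  have agree: "u l = w l" if "l \<noteq> i" for l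
    using i(3) that PiE_out[OF uP] PiE_out[OF wP] by metis
  have c: "0 < real (card (V j))" using fv by (simp add: card_gt_0_iff)
  show "\<bar>avg V j y u - avg V j y w\<bar> \<le> t"
  proof (cases "i = j")
    case True
    have "u(j:=a) = w(j:=a)" for a using agree True by auto
    then show ?thesis unfolding avg_def using t0 by simp
  next
    case False
    have b: "\<bar>y (u(j:=a)) - y (w(j:=a))\<bar> \<le> t" if a: "a \<in> V j" for a
    proof -
      have "prod_edges k V E (u(j:=a)) (w(j:=a))"
        unfolding prod_edges_def prod_vertices_def
        using upd_in[OF uP j a] upd_in[OF wP j a] i False by auto
      thus ?thesis using L by (simp add: lipp_def)
    qed
    have "\<bar>avg V j y u - avg V j y w\<bar> = \<bar>\<Sum>a\<in>V j. y (u(j:=a)) - y (w(j:=a))\<bar> / card (V j)"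
      unfolding avg_def by (simp add: diff_divide_distrib[symmetric] sum_subtractf)
    also have "\<dots> \<le> (\<Sum>a\<in>V j. \<bar>y (u(j:=a)) - y (w(j:=a))\<bar>) / card (V j)"
      using c by (intro divide_right_mono sum_abs) auto
    also have "\<dots> \<le> (\<Sum>a\<in>V j. t) / card (V j)"
      using c b by (intro divide_right_mono sum_mono) auto
    also have "\<dots> = t" using c by simp
    finally show ?thesis .
  qed
qed

lemma Mx_lip:
  assumes "\<forall>i<k. finite (V i) \<and> V i \<noteq> {}" "lipp k V E t x"
  shows "i \<le> k \<Longrightarrow> lipp k V E t (Mx V x i)"
proof (induction i)
  case (Suc i)
  hence i: "i < k" and L: "lipp k V E t (Mx V x i)" by auto
  show ?case using avg_lip[OF i _ _ L] assms i by simp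
qed (use assms in simp)

lemma Mx_dep:
  assumes "i \<le> k" "u \<in> PiE {..<k} V" "w \<in> PiE {..<k} V" "\<forall>l\<ge>i. u l = w l"
  shows "Mx V x i u = Mx V x i w"
  using assms
proof (induction i arbitrary: u w)
  case 0
  then have "u = w" by auto
  then show ?case by simp
next
  case (Suc i)
  have "Mx V x i (u(i:=a)) = Mx V x i (w(i:=a))" if "a \<in> V i" for a
    using Suc.prems that by (intro Suc.IH) (auto intro: upd_in)
  then show ?case by (simp add: avg_def)
qed

lemma Mx_sum:
  assumes "\<forall>i<k. finite (V i) \<and> V i \<noteq> {}"
  shows "i \<le> k \<Longrightarrow> (\<Sum>u\<in>PiE {..<k} V. Mx V x i u) = (\<Sum>u\<in>PiE {..<k} V. x u)"
proof (induction i)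
  case (Suc i)
  then show ?case using assms sum_avg[of i k V "Mx V x i"] by simp
qed simp

lemma Mx_zero:
  assumes fv: "\<forall>i<k. finite (V i) \<and> V i \<noteq> {}" and s: "(\<Sum>u\<in>PiE {..<k} V. x u) = 0"
    and u: "u \<in> PiE {..<k} V"
  shows "Mx V x k u = 0"
proof -
  let ?P = "PiE {..<k} V"
  have fin: "finite ?P" using fv by (intro finite_PiE) auto
  have eq: "Mx V x k w = Mx V x k u" if w: "w \<in> ?P" for w
  proof (rule Mx_dep[OF order_refl w u])
    show "\<forall>l\<ge>k. w l = u l" by (intro allI impI) (simp add: PiE_out[OF w] PiE_out[OF u])
  qed
  have "(\<Sum>w\<in>?P. Mx V x k w) = (\<Sum>w\<in>?P. Mx V x k u)"
    by (rule sum.cong[OF refl eq])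
  also have "\<dots> = card ?P * Mx V x k u" by simp
  finally have "card ?P * Mx V x k u = 0" using Mx_sum[OF fv, of k x] s by simp
  moreover have "card ?P \<noteq> 0" using fin u by auto
  ultimately show ?thesis by simp
qed



lemma Mx_step:
  assumes i: "i < k" and u: "u \<in> PiE {..<k} V"
    and fin: "finite (V i)" "V i \<noteq> {}" and gp: "0 < gamma (V i) (E i)"
    and L: "lipp k V E t (Mx V x i)"
  shows "\<bar>Mx V x i u - Mx V x (Suc i) u\<bar> \<le> t / gamma (V i) (E i)"
proof -
  define f where "f = (\<lambda>a. Mx V x i (u(i:=a)))"
  have ui: "u i \<in> V i" using u i by (auto simp: PiE_def Pi_def)
  have t0: "0 \<le> t" using L by (simp add: lipp_def)
  have fb: "\<bar>f (u i) - (\<Sum>v\<in>V i. f v) / card (V i)\<bar> \<le> gamma_x (V i) (E i) f / gamma (V i) (E i)"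
    by (rule factor_bound[OF fin gp ui])
  have "gamma_x (V i) (E i) f \<le> t"
  proof (rule gx_le[OF fin(1) t0])
    fix a b assume ab: "a \<in> V i" "b \<in> V i" "E i a b"
    have "prod_edges k V E (u(i:=a)) (u(i:=b))"
      unfolding prod_edges_def prod_vertices_def
      using upd_in[OF u i ab(1)] upd_in[OF u i ab(2)] i ab(3) by auto
    thus "\<bar>f a - f b\<bar> \<le> t" using L by (simp add: lipp_def f_def)
  qed
  hence "gamma_x (V i) (E i) f / gamma (V i) (E i) \<le> t / gamma (V i) (E i)"
    using gp by (simp add: divide_right_mono)
  moreover have "f (u i) = Mx V x i u" by (simp add: f_def)
  moreover have "(\<Sum>v\<in>V i. f v) / card (V i) = Mx V x (Suc i) u" by (simp add: f_def avg_def)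
  ultimately show ?thesis using fb by simp
qed

lemma telescope:
  assumes fv: "\<forall>i<k. finite (V i) \<and> V i \<noteq> {} \<and> 0 < gamma (V i) (E i)"
    and L: "lipp k V E t x" and u: "u \<in> PiE {..<k} V"
  shows "i \<le> k \<Longrightarrow> \<bar>x u - Mx V x i u\<bar> \<le> (\<Sum>j<i. t / gamma (V j) (E j))"
proof (induction i)
  case 0 then show ?case by simp
next
  case (Suc i)
  hence i: "i < k" by simp
  have L': "lipp k V E t (Mx V x i)" using Mx_lip[of k V E t x i] fv L i by auto
  have "\<bar>x u - Mx V x (Suc i) u\<bar> \<le> \<bar>x u - Mx V x i u\<bar> + \<bar>Mx V x i u - Mx V x (Suc i) u\<bar>"
    by linarith
  also have "\<dots> \<le> (\<Sum>j<i. t / gamma (V j) (E j)) + t / gamma (V i) (E i)"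
    using Suc.IH i Mx_step[OF i u _ _ _ L'] fv i by (intro add_mono) auto
  finally show ?case by simp
qed

lemma lower_bound:
  assumes k: "1 \<le> k" and fv: "\<forall>i<k. finite (V i) \<and> V i \<noteq> {} \<and> 0 < gamma (V i) (E i)"
    and xf: "x \<in> feasible (prod_vertices k V)"
  shows "1 / (\<Sum>i<k. 1 / gamma (V i) (E i)) \<le> gamma_x (prod_vertices k V) (prod_edges k V E) x"
proof -
  let ?P = "PiE {..<k} V"
  let ?S = "\<Sum>i<k. 1 / gamma (V i) (E i)"
  have finP: "finite ?P" using fv by (intro finite_PiE) auto
  have neP: "?P \<noteq> {}" using fv by (simp add: PiE_eq_empty_iff)
  define t where "t = gamma_x ?P (prod_edges k V E) x"
  have t0: "0 \<le> t" unfolding t_def by (rule gx_nonneg[OF finP])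
  have L: "lipp k V E t x" unfolding lipp_def
  proof (intro conjI allI impI t0)
    fix u w assume "prod_edges k V E u w"
    moreover hence "u \<in> ?P" "w \<in> ?P" by (auto simp: prod_edges_def prod_vertices_def)
    ultimately show "\<bar>x u - x w\<bar> \<le> t" unfolding t_def using gx_ge[OF finP] by blast
  qed
  have sx: "(\<Sum>u\<in>?P. x u) = 0" and nx: "sup_norm ?P x = 1"
    using xf by (auto simp: feasible_def prod_vertices_def)
  obtain u0 where u0: "u0 \<in> ?P" "\<bar>x u0\<bar> = 1" using sn_in[OF finP neP, of x] nx by auto
  have fv2: "\<forall>i<k. finite (V i) \<and> V i \<noteq> {}" using fv by auto
  have "\<bar>x u0 - Mx V x k u0\<bar> \<le> (\<Sum>j<k. t / gamma (V j) (E j))"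
    by (rule telescope[OF fv L u0(1)]) simp
  moreover have "Mx V x k u0 = 0" by (rule Mx_zero[OF fv2 sx u0(1)])
  moreover have "(\<Sum>j<k. t / gamma (V j) (E j)) = t * ?S"
    by (simp add: sum_distrib_left)
  ultimately have "1 \<le> t * ?S" using u0(2) by simp
  moreover have "0 < ?S"
  proof (rule sum_pos)
    have "0 \<in> {..<k}" using k by simp
    thus "{..<k} \<noteq> {}" by blast
  qed (use fv in auto)
  ultimately have "1 / ?S \<le> t" by (simp add: divide_le_eq mult.commute)
  thus ?thesis by (simp add: t_def prod_vertices_def)
qed



lemma approx_norm:
  assumes fin: "finite V" and Vne: "V \<noteq> {}" and ne: "feasible V \<noteq> {}" and gp: "0 < gamma V E" and r: "1 < r"
  shows "\<exists>y v. y \<in> feasible V \<and> gamma_x V E y < r * gamma V E \<and> v \<in> V \<and> y v = 1"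
proof -
  have "gamma V E < r * gamma V E" using gp r by simp
  then obtain y where y: "y \<in> feasible V" "gamma_x V E y < r * gamma V E"
    using gamma_approx[OF ne] by blast
  obtain v where v: "v \<in> V" "\<bar>y v\<bar> = 1" using sn_in[OF fin Vne, of y] y(1) by (auto simp: feasible_def)
  show ?thesis
  proof (cases "y v = 1")
    case True
    then show ?thesis using y v by blast
  next
    case False
    hence yv: "y v = -1" using v(2) by linarith
    have "(\<lambda>u. - y u) \<in> feasible V" using y(1) by (simp add: feasible_def sn_neg sum_negf)
    moreover have "gamma_x V E (\<lambda>u. - y u) < r * gamma V E" using y(2) by (simp add: gx_neg)
    ultimately show ?thesis using v(1) yv by force
  qed
qed

lemma upper_bound:
  assumes k: "1 \<le> k"
    and fv: "\<forall>i<k. finite (V i) \<and> V i \<noteq> {} \<and> feasible (V i) \<noteq> {} \<and> 0 < gamma (V i) (E i)"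
    and r: "1 < r"
  shows "\<exists>x\<in>feasible (prod_vertices k V).
           gamma_x (prod_vertices k V) (prod_edges k V E) x \<le> r * (1 / (\<Sum>i<k. 1 / gamma (V i) (E i)))"
proof -
  let ?P = "PiE {..<k} V"
  let ?S = "\<Sum>i<k. 1 / gamma (V i) (E i)"
  have "\<forall>i\<in>{..<k}. \<exists>p. fst p \<in> feasible (V i) \<and> gamma_x (V i) (E i) (fst p) < r * gamma (V i) (E i)
        \<and> snd p \<in> V i \<and> fst p (snd p) = 1"
  proof
    fix i assume "i \<in> {..<k}"
    hence "finite (V i)" "V i \<noteq> {}" "feasible (V i) \<noteq> {}" "0 < gamma (V i) (E i)" using fv by auto
    then obtain y v where "y \<in> feasible (V i) \<and> gamma_x (V i) (E i) y < r * gamma (V i) (E i) \<and> v \<in> V i \<and> y v = 1"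
      using approx_norm[OF _ _ _ _ r] by blast
    thus "\<exists>p. fst p \<in> feasible (V i) \<and> gamma_x (V i) (E i) (fst p) < r * gamma (V i) (E i)
        \<and> snd p \<in> V i \<and> fst p (snd p) = 1" by (intro exI[of _ "(y, v)"]) simp
  qed
  then obtain F where F: "\<forall>i\<in>{..<k}. fst (F i) \<in> feasible (V i) \<and> gamma_x (V i) (E i) (fst (F i)) < r * gamma (V i) (E i)
        \<and> snd (F i) \<in> V i \<and> fst (F i) (snd (F i)) = 1"
    by (rule bchoice[elim_format]) blast
  define Y where "Y = (\<lambda>i. fst (F i))"
  define vv where "vv = (\<lambda>i. snd (F i))"
  define g where "g = (\<lambda>i. gamma_x (V i) (E i) (Y i))"
  have Yf: "Y i \<in> feasible (V i)" and gl: "g i < r * gamma (V i) (E i)" and vvV: "vv i \<in> V i"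
    and Yv: "Y i (vv i) = 1" if "i < k" for i
    using F that by (auto simp: Y_def vv_def g_def)
  have Ysum: "(\<Sum>a\<in>V i. Y i a) = 0" and Ynorm: "sup_norm (V i) (Y i) = 1" if "i < k" for i
    using Yf[OF that] by (auto simp: feasible_def)
  have gge: "gamma (V i) (E i) \<le> g i" if "i < k" for i
    unfolding g_def using gamma_lower[OF _ Yf[OF that]] fv that by blast
  have gpos: "0 < g i" if "i < k" for i using gge[OF that] fv that by force
  define S' where "S' = (\<Sum>i<k. 1 / g i)"
  have "0 \<in> {..<k}" using k by simp
  hence k0: "{..<k} \<noteq> {}" by blast
  have S'pos: "0 < S'" unfolding S'_def using gpos k0 by (intro sum_pos) auto
  define lam where "lam = (\<lambda>i. (1 / g i) / S')"
  have lam0: "0 \<le> lam i" if "i < k" for i using gpos[OF that] S'pos by (simp add: lam_def)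
  have "(\<Sum>i<k. lam i) = (\<Sum>i<k. 1 / g i) / S'" unfolding lam_def by (rule sum_divide_distrib[symmetric])
  also have "\<dots> = 1" using S'pos unfolding S'_def by simp
  finally have lamsum: "(\<Sum>i<k. lam i) = 1" .
  define x where "x = (\<lambda>u. \<Sum>i<k. lam i * Y i (u i))"
  have finV: "\<forall>i<k. finite (V i)" using fv by auto
  have finP: "finite ?P" using fv by (intro finite_PiE) auto
  have neVi: "V i \<noteq> {}" if "i < k" for i using vvV[OF that] by auto
  have neP: "?P \<noteq> {}" using neVi by (simp add: PiE_eq_empty_iff)
  have uiV: "u i \<in> V i" if "u \<in> ?P" "i < k" for u i using that by (auto simp: PiE_def Pi_def)
  have Ycoord: "(\<Sum>u\<in>?P. Y i (u i)) = 0" if i: "i < k" for i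
  proof -
    have "real (card (V i)) * (\<Sum>u\<in>?P. Y i (u i)) = (\<Sum>u\<in>?P. \<Sum>a\<in>V i. Y i ((u(i:=a)) i))"
      using sum_upd[of i k V "\<lambda>u. Y i (u i)"] i fv by simp
    also have "\<dots> = 0" using Ysum[OF i] by simp
    finally show ?thesis using neVi[OF i] fv i by (simp add: card_eq_0_iff)
  qed
  have sx: "(\<Sum>u\<in>?P. x u) = 0"
    unfolding x_def by (subst sum.swap) (simp add: sum_distrib_left[symmetric] Ycoord)
  have xle: "\<bar>x u\<bar> \<le> 1" if u: "u \<in> ?P" for u
  proof -
    have "\<bar>x u\<bar> \<le> (\<Sum>i<k. \<bar>lam i * Y i (u i)\<bar>)" unfolding x_def by (rule sum_abs)
    also have "\<dots> \<le> (\<Sum>i<k. lam i)"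
    proof (rule sum_mono)
      fix i assume "i \<in> {..<k}"
      hence i: "i < k" by simp
      have "\<bar>Y i (u i)\<bar> \<le> 1" using sn_ge[of "V i" "u i" "Y i"] Ynorm[OF i] uiV[OF u i] fv i by auto
      thus "\<bar>lam i * Y i (u i)\<bar> \<le> lam i" using lam0[OF i]
        by (simp add: abs_mult mult_left_le)
    qed
    finally show ?thesis using lamsum by simp
  qed
  define v0 where "v0 = restrict vv {..<k}"
  have v0P: "v0 \<in> ?P" unfolding v0_def using vvV by auto
  have xv0: "x v0 = 1" unfolding x_def v0_def using Yv lamsum by simp
  have nx: "sup_norm ?P x = 1"
  proof (rule antisym)
    show "sup_norm ?P x \<le> 1" by (rule sn_le[OF finP neP xle])
    show "1 \<le> sup_norm ?P x" using sn_ge[OF finP v0P, of x] xv0 by simp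
  qed
  have xf: "x \<in> feasible (prod_vertices k V)" using sx nx by (simp add: feasible_def prod_vertices_def)
  have gx: "gamma_x ?P (prod_edges k V E) x \<le> 1 / S'"
  proof (rule gx_le[OF finP])
    show "0 \<le> 1 / S'" using S'pos by simp
    fix u w assume "u \<in> ?P" "w \<in> ?P" "prod_edges k V E u w"
    then obtain i where i: "i < k" "E i (u i) (w i)" "\<forall>l<k. l \<noteq> i \<longrightarrow> u l = w l"
      and uP: "u \<in> ?P" and wP: "w \<in> ?P"
      by (auto simp: prod_edges_def prod_vertices_def)
    have "x u - x w = (\<Sum>l<k. lam l * (Y l (u l) - Y l (w l)))"
      unfolding x_def by (simp add: sum_subtractf[symmetric] algebra_simps)
    also have "\<dots> = (\<Sum>l<k. if l = i then lam i * (Y i (u i) - Y i (w i)) else 0)"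
      by (rule sum.cong) (use i in auto)
    also have "\<dots> = lam i * (Y i (u i) - Y i (w i))" using i by simp
    finally have d: "\<bar>x u - x w\<bar> = lam i * \<bar>Y i (u i) - Y i (w i)\<bar>"
      using lam0[OF i(1)] by (simp add: abs_mult)
    have "\<bar>Y i (u i) - Y i (w i)\<bar> \<le> g i"
      unfolding g_def using gx_ge[of "V i" "u i" "w i" "E i" "Y i"] uiV[OF uP i(1)] uiV[OF wP i(1)] i fv by auto
    hence "lam i * \<bar>Y i (u i) - Y i (w i)\<bar> \<le> lam i * g i" using lam0[OF i(1)] by (rule mult_left_mono)
    also have "lam i * g i = 1 / S'" unfolding lam_def using gpos[OF i(1)] by simp
    finally show "\<bar>x u - x w\<bar> \<le> 1 / S'" using d by simp
  qed
  have Spos: "0 < ?S" using fv k0 by (intro sum_pos) auto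
  have "?S / r \<le> S'"
  proof -
    have "?S / r = (\<Sum>i<k. 1 / (r * gamma (V i) (E i)))" by (simp add: sum_divide_distrib mult.commute)
    also have "\<dots> \<le> S'" unfolding S'_def
    proof (rule sum_mono)
      fix i assume "i \<in> {..<k}"
      hence i: "i < k" by simp
      show "1 / (r * gamma (V i) (E i)) \<le> 1 / g i"
        using gl[OF i] gpos[OF i] by (intro divide_left_mono) auto
    qed
    finally show ?thesis .
  qed
  hence "1 / S' \<le> r * (1 / ?S)" using Spos r S'pos
    by (simp add: divide_le_eq le_divide_eq mult.commute)
  with gx have "gamma_x ?P (prod_edges k V E) x \<le> r * (1 / ?S)" by linarith
  thus ?thesis using xf by (auto simp: prod_vertices_def)
qed


theorem theorem5p2:
  fixes k :: nat and V :: "nat \<Rightarrow> 'a set" and E :: "nat \<Rightarrow> 'a \<Rightarrow> 'a \<Rightarrow> bool"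
  assumes "k \<ge> 1"
    and "\<And>i. i < k \<Longrightarrow> simple_graph (V i) (E i)"
    and "\<And>i. i < k \<Longrightarrow> connected_graph (V i) (E i)"
    and "\<And>i. i < k \<Longrightarrow> card (V i) \<ge> 2"
  shows "gamma (prod_vertices k V) (prod_edges k V E)
           = 1 / (\<Sum>i<k. 1 / gamma (V i) (E i))"
proof -
  have fv: "\<forall>i<k. finite (V i) \<and> V i \<noteq> {} \<and> 0 < gamma (V i) (E i)"
  proof (intro allI impI conjI)
    fix i assume i: "i < k"
    show "finite (V i)" using assms(2)[OF i] by (simp add: simple_graph_def)
    show "V i \<noteq> {}" using assms(4)[OF i] by auto
    show "0 < gamma (V i) (E i)" by (rule gamma_pos[OF assms(2-4)[OF i]])
  qed
  have fv': "\<forall>i<k. finite (V i) \<and> V i \<noteq> {} \<and> feasible (V i) \<noteq> {} \<and> 0 < gamma (V i) (E i)"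
    using fv feasible_ne assms(4) by blast
  let ?P = "prod_vertices k V"
  let ?G = "gamma ?P (prod_edges k V E)"
  let ?S = "\<Sum>i<k. 1 / gamma (V i) (E i)"
  have finP: "finite ?P" unfolding prod_vertices_def using fv by (intro finite_PiE) auto
  have "0 \<in> {..<k}" using assms(1) by simp
  hence k0: "{..<k} \<noteq> {}" by blast
  have Spos: "0 < ?S" using fv k0 by (intro sum_pos) auto
  obtain x0 where "x0 \<in> feasible ?P"
    using upper_bound[OF assms(1) fv', of 2] by auto
  hence neF: "feasible ?P \<noteq> {}" by auto
  have lo: "1 / ?S \<le> ?G"
    by (rule gamma_greatest[OF neF]) (rule lower_bound[OF assms(1) fv])
  have hi: "?G \<le> 1 / ?S"
  proof (rule ccontr)
    assume "\<not> ?G \<le> 1 / ?S"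
    hence gt: "1 / ?S < ?G" by simp
    define c where "c = 1 / ?S"
    have c0: "0 < c" using Spos by (simp add: c_def)
    define r where "r = (?G / c + 1) / 2"
    have "1 < ?G / c" using gt c0 by (simp add: c_def[symmetric] less_divide_eq)
    hence r1: "1 < r" by (simp add: r_def)
    obtain x where x: "x \<in> feasible ?P" "gamma_x ?P (prod_edges k V E) x \<le> r * c"
      using upper_bound[OF assms(1) fv' r1] by (auto simp: c_def)
    have "?G \<le> gamma_x ?P (prod_edges k V E) x" by (rule gamma_lower[OF finP x(1)])
    also have "\<dots> \<le> r * c" by (rule x(2))
    also have "r * c = (?G + c) / 2" unfolding r_def using c0 by (simp add: field_simps)
    finally show False using gt by (simp add: c_def)
  qed
  show ?thesis using lo hi by simp
qed

end
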